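(* Let $M=(E,\mathcal{I})$ be a matroid of rank $r$, $u:E\to\mathbb{Z}_{\ge0}$ integer capacities and $k\in\mathbb{N}$. Suppose bases $B_1,\dots,B_k$ (with insertion levels) and levels $\ell:E\to\mathbb{Z}_{\ge0}$ satisfy invariants (I1)–(I3) with height $h>r+2$. Then there exists a level $j$ such that $$\sum_{e\in E}\min\{u(e),x(e)\}\ \ge\ u(E_{<j})+k\,\mathrm{rank}(E_{\ge j}).$$ Consequently $B_1,\dots,B_k$ is an optimal solution of the $k$-fold matroid union problem and $E_{\ge j}$ is an optimal dual solution.
   Context: For $e\in E$, $x(e)=|\{i: e\in B_i\}|$; $e$ is uncovered if $x(e)<u(e)$. $u(T)=\sum_{e\in T}u(e)$. The $k$-fold matroid union problem maximizes $\sum_e\min\{u(e),x(e)\}$ over $k$ bases; the dual minimizes $k\,\mathrm{rank}(S)+u(E\setminus S)$ over $S\subseteq E$, and the optimal values coincide. Each element $e\in B_i$ carries an insertion level (the value of $\ell(e)$ when $e$ was inserted into $B_i$; levels never decrease, so insertion levels are at most current levels). $E_j=\{e:\ell(e)=j\}$ and analogously $E_{<j},E_{\ge j},E_{>j}$; $B_{i,\ge j}$ denotes the elements of $B_i$ with insertion level at least $j$. Invariants: (I1) $\ell(e)=0$ whenever $e$ lies in strictly more than $u(e)$ bases; (I2) for all $i$ and $j$, $B_{i,\ge j}$ spans $E_{>j}$; (I3) every uncovered $e$ has $\ell(e)\ge h$. *)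

theory Defs
  imports Main
begin

definition matroid :: "'a set \<Rightarrow> ('a set \<Rightarrow> bool) \<Rightarrow> bool" where
  "matroid E indep \<longleftrightarrow>
     finite E \<and>
     (\<forall>I. indep I \<longrightarrow> I \<subseteq> E) \<and>
     indep {} \<and>
     (\<forall>I J. indep J \<and> I \<subseteq> J \<longrightarrow> indep I) \<and>
     (\<forall>I J. indep I \<and> indep J \<and> card I < card J \<longrightarrow> (\<exists>e\<in>J - I. indep (insert e I)))"

definition mrank :: "('a set \<Rightarrow> bool) \<Rightarrow> 'a set \<Rightarrow> nat" where
  "mrank indep S = Max (card ` {I. I \<subseteq> S \<and> indep I})"

definition is_basis :: "'a set \<Rightarrow> ('a set \<Rightarrow> bool) \<Rightarrow> 'a set \<Rightarrow> bool" where
  "is_basis E indep B \<longleftrightarrow> B \<subseteq> E \<and> indep B \<and> (\<forall>e\<in>E - B. \<not> indep (insert e B))"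

definition mclosure :: "'a set \<Rightarrow> ('a set \<Rightarrow> bool) \<Rightarrow> 'a set \<Rightarrow> 'a set" where
  "mclosure E indep A = {e \<in> E. mrank indep (insert e A) = mrank indep A}"

definition spans :: "'a set \<Rightarrow> ('a set \<Rightarrow> bool) \<Rightarrow> 'a set \<Rightarrow> 'a set \<Rightarrow> bool" where
  "spans E indep A T \<longleftrightarrow> T \<subseteq> mclosure E indep A"

definition coverage :: "nat \<Rightarrow> (nat \<Rightarrow> 'a set) \<Rightarrow> 'a \<Rightarrow> nat" where
  "coverage k B e = card {i. i < k \<and> e \<in> B i}"

definition union_value :: "'a set \<Rightarrow> ('a \<Rightarrow> nat) \<Rightarrow> nat \<Rightarrow> (nat \<Rightarrow> 'a set) \<Rightarrow> nat" where
  "union_value E u k B = (\<Sum>e\<in>E. min (u e) (coverage k B e))"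

definition dual_value :: "'a set \<Rightarrow> ('a set \<Rightarrow> bool) \<Rightarrow> ('a \<Rightarrow> nat) \<Rightarrow> nat \<Rightarrow> 'a set \<Rightarrow> nat" where
  "dual_value E indep u k S = k * mrank indep S + sum u (E - S)"

end

theory Submission
  imports Defs
begin

lemma m_fin: "matroid E indep \<Longrightarrow> finite {I. I \<subseteq> S \<and> indep I}"
proof -
  assume M: "matroid E indep"
  have "{I. I \<subseteq> S \<and> indep I} \<subseteq> Pow E" using M unfolding matroid_def by auto
  moreover have "finite E" using M unfolding matroid_def by auto
  ultimately show ?thesis by (meson finite_Pow_iff finite_subset)
qed

lemma m_indep_fin: "matroid E indep \<Longrightarrow> indep I \<Longrightarrow> finite I"
  unfolding matroid_def by (meson finite_subset)

lemma m_sub: "matroid E indep \<Longrightarrow> indep J \<Longrightarrow> I \<subseteq> J \<Longrightarrow> indep I"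
  unfolding matroid_def by blast

lemma m_aug: "matroid E indep \<Longrightarrow> indep I \<Longrightarrow> indep J \<Longrightarrow> card I < card J
   \<Longrightarrow> \<exists>e\<in>J - I. indep (insert e I)"
  unfolding matroid_def by blast

lemma rank_ge: "matroid E indep \<Longrightarrow> I \<subseteq> S \<Longrightarrow> indep I \<Longrightarrow> card I \<le> mrank indep S"
  unfolding mrank_def
  by (rule Max_ge) (auto simp: m_fin)

lemma rank_ex: "matroid E indep \<Longrightarrow> \<exists>I. I \<subseteq> S \<and> indep I \<and> card I = mrank indep S"
proof -
  assume M: "matroid E indep"
  have "indep {}" using M unfolding matroid_def by auto
  hence ne: "card ` {I. I \<subseteq> S \<and> indep I} \<noteq> {}" by auto
  have "mrank indep S \<in> card ` {I. I \<subseteq> S \<and> indep I}"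
    unfolding mrank_def using M ne by (intro Max_in) (auto simp: m_fin)
  thus ?thesis by auto
qed

lemma rank_mono: "matroid E indep \<Longrightarrow> S \<subseteq> T \<Longrightarrow> mrank indep S \<le> mrank indep T"
  by (metis rank_ex rank_ge order_trans)

lemma rank_indep: "matroid E indep \<Longrightarrow> indep A \<Longrightarrow> mrank indep A = card A"
  by (metis rank_ex rank_ge order_refl m_indep_fin card_mono le_antisym)

lemma closure_dep: "matroid E indep \<Longrightarrow> indep A \<Longrightarrow> e \<notin> A \<Longrightarrow> e \<in> mclosure E indep A
   \<Longrightarrow> \<not> indep (insert e A)"
proof
  assume M: "matroid E indep" and A: "indep A" and e: "e \<notin> A" "e \<in> mclosure E indep A"
    and I: "indep (insert e A)"
  have "mrank indep (insert e A) = mrank indep A" using e unfolding mclosure_def by auto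
  moreover have "mrank indep (insert e A) = card A + 1"
    using rank_indep[OF M I] e m_indep_fin[OF M A] by simp
  moreover have "mrank indep A = card A" using rank_indep[OF M A] .
  ultimately show False by simp
qed

lemma span_rank: "matroid E indep \<Longrightarrow> indep A \<Longrightarrow> spans E indep A Y \<Longrightarrow> mrank indep Y \<le> card A"
proof (rule ccontr)
  assume M: "matroid E indep" and A: "indep A" and sp: "spans E indep A Y"
    and c: "\<not> mrank indep Y \<le> card A"
  obtain I where I: "I \<subseteq> Y" "indep I" "card I = mrank indep Y" using rank_ex[OF M] by blast
  then obtain e where e: "e \<in> I - A" "indep (insert e A)" using m_aug[OF M A I(2)] c by auto
  have "e \<in> mclosure E indep A" using sp I e unfolding spans_def by auto
  thus False using closure_dep[OF M A _ _] e by auto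
qed

lemma cov_sum: "finite X \<Longrightarrow> (\<Sum>e\<in>X. coverage k B e) = (\<Sum>i<k. card (B i \<inter> X))"
proof -
  assume X: "finite X"
  have "(\<Sum>e\<in>X. coverage k B e) = (\<Sum>e\<in>X. \<Sum>i<k. if e \<in> B i then 1 else 0)"
    unfolding coverage_def
    by (intro sum.cong refl) (simp add: sum.If_cases lessThan_def Collect_conj_eq Int_commute)
  also have "\<dots> = (\<Sum>i<k. \<Sum>e\<in>X. if e \<in> B i then 1 else 0)" by (rule sum.swap)
  also have "\<dots> = (\<Sum>i<k. card (B i \<inter> X))"
    using X by (intro sum.cong refl) (simp add: sum.If_cases Int_commute)
  finally show ?thesis .
qed

lemma weak_dual:
  assumes M: "matroid E indep" and C: "\<forall>i<k. is_basis E indep (C i)" and S: "S \<subseteq> E"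
  shows "union_value E u k C \<le> dual_value E indep u k S"
proof -
  have fE: "finite E" using M unfolding matroid_def by auto
  have fS: "finite S" using S fE finite_subset by blast
  have "union_value E u k C = (\<Sum>e\<in>S. min (u e) (coverage k C e)) + (\<Sum>e\<in>E - S. min (u e) (coverage k C e))"
    unfolding union_value_def using S fE by (metis sum.subset_diff add.commute)
  also have "\<dots> \<le> (\<Sum>e\<in>S. coverage k C e) + sum u (E - S)"
    by (intro add_mono sum_mono) auto
  also have "(\<Sum>e\<in>S. coverage k C e) = (\<Sum>i<k. card (C i \<inter> S))" using cov_sum[OF fS] .
  also have "\<dots> \<le> (\<Sum>i<k. mrank indep S)"
  proof (intro sum_mono)
    fix i assume "i \<in> {..<k}"
    hence "indep (C i)" using C unfolding is_basis_def by auto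
    hence "indep (C i \<inter> S)" using m_sub[OF M] by blast
    thus "card (C i \<inter> S) \<le> mrank indep S" using rank_ge[OF M] by blast
  qed
  finally show ?thesis unfolding dual_value_def by (simp add: mult.commute)
qed

lemma pigeon:
  fixes f :: "nat \<Rightarrow> nat"
  assumes "f 1 < h"
  shows "\<exists>j. 1 \<le> j \<and> j \<le> h \<and> f j \<le> f (Suc j)"
proof (rule ccontr)
  assume "\<not> ?thesis"
  hence d: "\<And>j. 1 \<le> j \<Longrightarrow> j \<le> h \<Longrightarrow> f (Suc j) < f j" by force
  have "n \<le> h \<Longrightarrow> f (1 + n) + n \<le> f 1" for n
  proof (induction n)
    case (Suc n)
    then have "f (Suc (1 + n)) < f (1 + n)" using d[of "1+n"] by simp
    then show ?case using Suc by simp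
  qed simp
  from this[of h] assms show False by simp
qed

theorem mainTheorem2:
  fixes E :: "'a set" and indep :: "'a set \<Rightarrow> bool"
    and u :: "'a \<Rightarrow> nat" and k :: nat
    and B :: "nat \<Rightarrow> 'a set" and ins :: "nat \<Rightarrow> 'a \<Rightarrow> nat"
    and lvl :: "'a \<Rightarrow> nat" and h :: nat
  assumes M: "matroid E indep"
    and bases: "\<And>i. i < k \<Longrightarrow> is_basis E indep (B i)"
    and ins_le: "\<And>i e. i < k \<Longrightarrow> e \<in> B i \<Longrightarrow> ins i e \<le> lvl e"
    and I1: "\<And>e. e \<in> E \<Longrightarrow> coverage k B e > u e \<Longrightarrow> lvl e = 0"
    and I2: "\<And>i j. i < k \<Longrightarrow>
               spans E indep {e \<in> B i. ins i e \<ge> j} {e \<in> E. lvl e > j}"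
    and I3: "\<And>e. e \<in> E \<Longrightarrow> coverage k B e < u e \<Longrightarrow> lvl e \<ge> h"
    and height: "h > mrank indep E + 2"
  shows "\<exists>j. union_value E u k B \<ge>
               sum u {e \<in> E. lvl e < j} + k * mrank indep {e \<in> E. lvl e \<ge> j}
           \<and> (\<forall>C. (\<forall>i<k. is_basis E indep (C i)) \<longrightarrow> union_value E u k C \<le> union_value E u k B)
           \<and> (\<forall>S. S \<subseteq> E \<longrightarrow>
                 dual_value E indep u k {e \<in> E. lvl e \<ge> j} \<le> dual_value E indep u k S)"
proof -
  define f where "f j = mrank indep {e \<in> E. lvl e \<ge> j}" for j
  have fE: "finite E" using M unfolding matroid_def by auto
  have "f 1 \<le> mrank indep E" unfolding f_def by (rule rank_mono[OF M]) auto
  then obtain j where j: "1 \<le> j" "j \<le> h" "f j \<le> f (Suc j)" using pigeon[of f h] height by auto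
  let ?X = "{e \<in> E. lvl e \<ge> j}" and ?L = "{e \<in> E. lvl e < j}"
  have eqY: "{e \<in> E. lvl e > j} = {e \<in> E. lvl e \<ge> Suc j}" by auto
  have fX: "finite ?X" using fE by simp
  have main: "sum u ?L + k * mrank indep ?X \<le> union_value E u k B"
  proof -
    have split: "union_value E u k B = (\<Sum>e\<in>?L. min (u e) (coverage k B e)) + (\<Sum>e\<in>?X. min (u e) (coverage k B e))"
    proof -
      have "E = ?L \<union> ?X" by auto
      moreover have "?L \<inter> ?X = {}" by auto
      ultimately show ?thesis unfolding union_value_def using fE
        by (metis (no_types, lifting) finite_Un sum.union_disjoint)
    qed
    have s1: "(\<Sum>e\<in>?L. min (u e) (coverage k B e)) = sum u ?L"
    proof (intro sum.cong refl)
      fix e assume e: "e \<in> ?L"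
      have "\<not> coverage k B e < u e" using I3[of e] e j(2) by auto
      thus "min (u e) (coverage k B e) = u e" by simp
    qed
    have s2: "(\<Sum>e\<in>?X. min (u e) (coverage k B e)) = (\<Sum>e\<in>?X. coverage k B e)"
    proof (intro sum.cong refl)
      fix e assume e: "e \<in> ?X"
      have "\<not> coverage k B e > u e" using I1[of e] e j(1) by auto
      thus "min (u e) (coverage k B e) = coverage k B e" by simp
    qed
    have "k * mrank indep ?X = (\<Sum>i<k. mrank indep ?X)" by simp
    also have "\<dots> \<le> (\<Sum>i<k. card (B i \<inter> ?X))"
    proof (intro sum_mono)
      fix i assume i: "i \<in> {..<k}"
      let ?A = "{e \<in> B i. ins i e \<ge> j}"
      have Bi: "indep (B i)" "B i \<subseteq> E" using bases[of i] i unfolding is_basis_def by auto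
      have A: "indep ?A" using m_sub[OF M Bi(1)] by auto
      have sub: "?A \<subseteq> B i \<inter> ?X" using ins_le[of i] i Bi(2) by fastforce
      have "mrank indep ?X = f j" unfolding f_def ..
      also have "\<dots> \<le> f (Suc j)" by fact
      also have "\<dots> = mrank indep {e \<in> E. lvl e > j}" unfolding f_def eqY ..
      also have "\<dots> \<le> card ?A" using span_rank[OF M A I2[of i j]] i by simp
      also have "\<dots> \<le> card (B i \<inter> ?X)" using sub fX by (intro card_mono) auto
      finally show "mrank indep ?X \<le> card (B i \<inter> ?X)" .
    qed
    also have "\<dots> = (\<Sum>e\<in>?X. coverage k B e)" using cov_sum[OF fX] by simp
    finally show ?thesis using split s1 s2 by simp
  qed
  have dX: "dual_value E indep u k ?X = sum u ?L + k * mrank indep ?X"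
    unfolding dual_value_def
  proof -
    have "E - ?X = ?L" by auto
    thus "k * mrank indep ?X + sum u (E - ?X) = sum u ?L + k * mrank indep ?X" by simp
  qed
  have bs: "\<forall>i<k. is_basis E indep (B i)" using bases by auto
  show ?thesis
  proof (intro exI[of _ j] conjI allI impI)
    show "sum u ?L + k * mrank indep ?X \<le> union_value E u k B" by (rule main)
  next
    fix C assume C: "\<forall>i<k. is_basis E indep (C i)"
    have "union_value E u k C \<le> dual_value E indep u k ?X"
      using weak_dual[OF M C] by auto
    thus "union_value E u k C \<le> union_value E u k B" using dX main by simp
  next
    fix S assume S: "S \<subseteq> E"
    show "dual_value E indep u k ?X \<le> dual_value E indep u k S"
      using dX main weak_dual[OF M bs S, of u] by simp
  qed
qed

end
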